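(* Consider the model in the context with constant jump probability $p$, and let $\Psi^{(n)}=\sum_{i=1}^{\upsilon^{(n)}}\tilde{J}_i\,e^{-2\alpha(T_{\tilde{\mathrm{I}}^{(n)}_i+1}+\dots+T_n)}$. Then there is a constant $C>0$ depending only on $\alpha$ such that, as $n\to\infty$, $$\mathrm{Cov}\big(e^{-2\alpha U^{(n)}},\,\mathbb{E}[\Psi^{(n)}\mid\mathcal{Y}_n]\big)\lesssim pC\begin{cases}n^{-4\alpha},&0<\alpha<1/2,\\ n^{-2}\ln n,&\alpha=1/2,\\ n^{-(2\alpha+1)},&\alpha>1/2.\end{cases}$$
   Context: Tree: a Yule tree with birth rate $1$ conditioned on $n$ tips. $T_1,\dots,T_n$ are independent with $T_k\sim\mathrm{Exp}(k)$; starting from one lineage at the origin (time $0$), the $k$-th speciation event (internal node $k$, $k=1,\dots,n-1$, node $1$ the root) occurs at time $T_1+\dots+T_k$ and consists of a uniformly chosen one of the $k$ living lineages splitting in two; the tree height is $U^{(n)}=T_1+\dots+T_n$. Jumps: just after each speciation event, independently on each daughter lineage, a jump occurs with probability $p$. $\alpha>0$. $\mathcal{Y}_n$ is the $\sigma$-algebra generated by the tree (topology and $T_k$) and the jump pattern. Random pair: pick an unordered pair of distinct tips uniformly; let $m$ be the index of their most recent common ancestor node; $\upsilon^{(n)}$ is the number of internal nodes on the path from the root (inclusive) to node $m$, excluding $m$; $\tilde{\mathrm{I}}^{(n)}_1<\dots<\tilde{\mathrm{I}}^{(n)}_{\upsilon^{(n)}}$ their indices; $\tilde{J}_i=1$ iff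 a jump occurred just after speciation event $\tilde{\mathrm{I}}^{(n)}_i$ on the daughter lineage lying on the common path of the two tips. Notation: $a_n\lesssim b_n$ means $a_n\le(1+o(1))b_n$ as $n\to\infty$. *)

theory Defs
  imports "HOL-Probability.Probability"
begin

text \<open>Sample space of the model for n tips: a triple (T, (c, j)) where
  T k (k = 1..n) are the waiting times, T k ~ Exp(k), independent;
  c k (k = 1..n-1) is the label of the lineage splitting at speciation event k:
    just before event k the k living lineages carry labels 0..k-1; at event k the
    lineage labelled c k (uniform in {0..k-1}) splits; the daughter keeping the label
    c k is the "old" daughter, the other daughter gets the new label k;
  j k = (jump on old daughter, jump on new daughter) just after event k,
    independent Bernoulli(p).
  At the end the n tips carry labels 0..n-1.\<close>

definition yule_T :: "nat \<Rightarrow> (nat \<Rightarrow> real) measure" where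
  "yule_T n = PiM {1..n} (\<lambda>k. density lborel (exponential_density (real k)))"

definition yule_topo :: "nat \<Rightarrow> (nat \<Rightarrow> nat) pmf" where
  "yule_topo n = Pi_pmf {1..<n} 0 (\<lambda>k. pmf_of_set {..<k})"

definition yule_jumps :: "nat \<Rightarrow> real \<Rightarrow> (nat \<Rightarrow> bool \<times> bool) pmf" where
  "yule_jumps n p = Pi_pmf {1..<n} (False, False)
      (\<lambda>k. pair_pmf (bernoulli_pmf p) (bernoulli_pmf p))"

definition yule_space ::
  "nat \<Rightarrow> real \<Rightarrow> ((nat \<Rightarrow> real) \<times> ((nat \<Rightarrow> nat) \<times> (nat \<Rightarrow> bool \<times> bool))) measure" where
  "yule_space n p = yule_T n \<Otimes>\<^sub>M measure_pmf (pair_pmf (yule_topo n) (yule_jumps n p))"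

text \<open>Label, just after event k-1, of the ancestor of the lineage labelled l just after event k.\<close>
definition parent_label :: "(nat \<Rightarrow> nat) \<Rightarrow> nat \<Rightarrow> nat \<Rightarrow> nat" where
  "parent_label c k l = (if l = k then c k else l)"

primrec lab_steps :: "(nat \<Rightarrow> nat) \<Rightarrow> nat \<Rightarrow> nat \<Rightarrow> nat \<Rightarrow> nat" where
  "lab_steps c tp l 0 = l"
| "lab_steps c tp l (Suc i) = parent_label c (tp - i) (lab_steps c tp l i)"

text \<open>Label, just after event k (0 \<le> k \<le> n-1; event 0 = origin), of the ancestor of tip a.\<close>
definition tip_label :: "(nat \<Rightarrow> nat) \<Rightarrow> nat \<Rightarrow> nat \<Rightarrow> nat \<Rightarrow> nat" where
  "tip_label c n a k = lab_steps c (n - 1) a (n - 1 - k)"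

text \<open>Tip a descends from internal node k (1 \<le> k \<le> n-1).\<close>
definition passes :: "(nat \<Rightarrow> nat) \<Rightarrow> nat \<Rightarrow> nat \<Rightarrow> nat \<Rightarrow> bool" where
  "passes c n a k \<longleftrightarrow> tip_label c n a (k - 1) = c k"

text \<open>Jump indicator on the daughter lineage of node k that lies on the path to tip a.\<close>
definition jump_toward :: "(nat \<Rightarrow> nat) \<Rightarrow> (nat \<Rightarrow> bool \<times> bool) \<Rightarrow> nat \<Rightarrow> nat \<Rightarrow> nat \<Rightarrow> bool" where
  "jump_toward c j n a k = (if tip_label c n a k = k then snd (j k) else fst (j k))"

text \<open>Common ancestral internal nodes of tips a and b, their MRCA, and the path
  root..MRCA excluding the MRCA (indices I_1 < ... < I_upsilon).\<close>
definition common_nodes :: "(nat \<Rightarrow> nat) \<Rightarrow> nat \<Rightarrow> nat \<Rightarrow> nat \<Rightarrow> nat set" where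
  "common_nodes c n a b = {k \<in> {1..<n}. passes c n a k \<and> passes c n b k}"

definition mrca :: "(nat \<Rightarrow> nat) \<Rightarrow> nat \<Rightarrow> nat \<Rightarrow> nat \<Rightarrow> nat" where
  "mrca c n a b = Max (common_nodes c n a b)"

definition path_nodes :: "(nat \<Rightarrow> nat) \<Rightarrow> nat \<Rightarrow> nat \<Rightarrow> nat \<Rightarrow> nat set" where
  "path_nodes c n a b = common_nodes c n a b - {mrca c n a b}"

definition Psi_pair ::
  "real \<Rightarrow> nat \<Rightarrow> (nat \<Rightarrow> real) \<Rightarrow> (nat \<Rightarrow> nat) \<Rightarrow> (nat \<Rightarrow> bool \<times> bool) \<Rightarrow> nat \<Rightarrow> nat \<Rightarrow> real" where
  "Psi_pair \<alpha> n T c j a b =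
     (\<Sum>k\<in>path_nodes c n a b.
        (if jump_toward c j n a k then 1 else 0) * exp (- 2 * \<alpha> * (\<Sum>i\<in>{k+1..n}. T i)))"

text \<open>E[Psi^(n) | Y_n]: average over the uniformly chosen unordered pair of distinct tips,
  which is independent of Y_n.\<close>
definition cond_Psi ::
  "real \<Rightarrow> nat \<Rightarrow> (nat \<Rightarrow> real) \<times> ((nat \<Rightarrow> nat) \<times> (nat \<Rightarrow> bool \<times> bool)) \<Rightarrow> real" where
  "cond_Psi \<alpha> n \<omega> =
     (case \<omega> of (T, c, j) \<Rightarrow>
       (\<Sum>(a, b)\<in>{(a, b). a < b \<and> b < n}. Psi_pair \<alpha> n T c j a b) / real (n choose 2))"

definition height :: "nat \<Rightarrow> (nat \<Rightarrow> real) \<times> ((nat \<Rightarrow> nat) \<times> (nat \<Rightarrow> bool \<times> bool)) \<Rightarrow> real" where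
  "height n \<omega> = (\<Sum>i\<in>{1..n}. fst \<omega> i)"

definition covariance :: "'a measure \<Rightarrow> ('a \<Rightarrow> real) \<Rightarrow> ('a \<Rightarrow> real) \<Rightarrow> real" where
  "covariance M X Y = (\<integral>\<omega>. X \<omega> * Y \<omega> \<partial>M) - (\<integral>\<omega>. X \<omega> \<partial>M) * (\<integral>\<omega>. Y \<omega> \<partial>M)"

definition yule_cov :: "real \<Rightarrow> real \<Rightarrow> nat \<Rightarrow> real" where
  "yule_cov \<alpha> p n = covariance (yule_space n p)
      (\<lambda>\<omega>. exp (- 2 * \<alpha> * height n \<omega>)) (cond_Psi \<alpha> n)"

definition lemma5_rate :: "real \<Rightarrow> nat \<Rightarrow> real" where
  "lemma5_rate \<alpha> n =
     (if \<alpha> < 1/2 then real n powr (- 4 * \<alpha>)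
      else if \<alpha> = 1/2 then ln (real n) / (real n)^2
      else real n powr (- (2 * \<alpha> + 1)))"

end

theory Submission
  imports Defs
begin


lemma expd_int1:
  assumes l: "(0::real) < l"
  shows "integrable lborel (exponential_density l)" "integral\<^sup>L lborel (exponential_density l) = 1"
proof -
  interpret prob_space "density lborel (exponential_density l)"
    using prob_space_exponential_density[OF l] .
  have nn: "AE x in lborel. 0 \<le> exponential_density l x"
    using exponential_density_nonneg[OF l] by simp
  have "integrable (density lborel (exponential_density l)) (\<lambda>_. 1::real)" by simp
  then show "integrable lborel (exponential_density l)"
    by (subst (asm) integrable_density) (use nn in auto)
  have "integral\<^sup>L (density lborel (exponential_density l)) (\<lambda>_. 1::real) = 1"
    using prob_space by simp
  then show "integral\<^sup>L lborel (exponential_density l) = 1"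
    by (subst (asm) integral_density) (use nn in auto)
qed

lemma expd_laplace:
  assumes l: "(0::real) < l" and b: "0 \<le> b"
  shows "integrable (density lborel (exponential_density l)) (\<lambda>x. exp (- b * x))"
        "integral\<^sup>L (density lborel (exponential_density l)) (\<lambda>x. exp (- b * x)) = l / (l + b)"
proof -
  have nn: "AE x in lborel. 0 \<le> exponential_density l x"
    using exponential_density_nonneg[OF l] by simp
  have l2: "0 < l + b" using l b by simp
  have eq: "(\<lambda>x. exponential_density l x *\<^sub>R exp (- b * x)) = (\<lambda>x. (l / (l + b)) * exponential_density (l + b) x)"
    using l2 by (auto simp: exponential_density_def field_simps mult_exp_exp)
  have i1: "integrable lborel (\<lambda>x. exponential_density l x *\<^sub>R exp (- b * x))"
    unfolding eq using expd_int1[OF l2] by simp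
  have i2: "integral\<^sup>L lborel (\<lambda>x. exponential_density l x *\<^sub>R exp (- b * x)) = l / (l + b)"
    unfolding eq using expd_int1[OF l2] by simp
  show "integrable (density lborel (exponential_density l)) (\<lambda>x. exp (- b * x))"
    by (subst integrable_density) (use nn i1 in auto)
  show "integral\<^sup>L (density lborel (exponential_density l)) (\<lambda>x. exp (- b * x)) = l / (l + b)"
    by (subst integral_density) (use nn i2 in auto)
qed



definition ME :: "nat \<Rightarrow> real measure" where
  "ME k = density lborel (exponential_density (real (max k 1)))"

lemma ME_prob: "prob_space (ME k)"
  unfolding ME_def by (rule prob_space_exponential_density) simp

interpretation ME: product_sigma_finite ME
  by (simp add: ME_prob prob_space_imp_sigma_finite product_sigma_finite.intro)

lemma yule_T_eq: "yule_T n = PiM {1..n} ME"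
  unfolding yule_T_def ME_def by (intro PiM_cong) auto

lemma yule_T_prob: "prob_space (yule_T n)"
  unfolding yule_T_eq by (rule prob_space_PiM) (simp add: ME_prob) 

lemma yule_T_prod:
  assumes b: "\<And>i. 0 \<le> b i"
  shows "integrable (yule_T n) (\<lambda>T. \<Prod>i\<in>{1..n}. exp (- b i * T i))"
        "integral\<^sup>L (yule_T n) (\<lambda>T. \<Prod>i\<in>{1..n}. exp (- b i * T i)) = (\<Prod>i\<in>{1..n}. real i / (real i + b i))"
proof -
  have int: "\<And>i. i \<in> {1..n} \<Longrightarrow> integrable (ME i) (\<lambda>x. exp (- b i * x))"
    unfolding ME_def by (rule expd_laplace) (auto intro: b)
  show "integrable (yule_T n) (\<lambda>T. \<Prod>i\<in>{1..n}. exp (- b i * T i))"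
    unfolding yule_T_eq using ME.product_integrable_prod[of "{1..n}" "\<lambda>i x. exp (- b i * x)"] int by simp
  have "integral\<^sup>L (yule_T n) (\<lambda>T. \<Prod>i\<in>{1..n}. exp (- b i * T i)) = (\<Prod>i\<in>{1..n}. integral\<^sup>L (ME i) (\<lambda>x. exp (- b i * x)))"
    unfolding yule_T_eq using ME.product_integral_prod[of "{1..n}" "\<lambda>i x. exp (- b i * x)"] int by simp
  also have "\<dots> = (\<Prod>i\<in>{1..n}. real i / (real i + b i))"
  proof (rule prod.cong[OF refl])
    fix i assume i: "i \<in> {1..n}"
    then have "max i 1 = i" by auto
    then show "integral\<^sup>L (ME i) (\<lambda>x. exp (- b i * x)) = real i / (real i + b i)"
      unfolding ME_def using expd_laplace(2)[of "real i" "b i"] i b by auto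
  qed
  finally show "integral\<^sup>L (yule_T n) (\<lambda>T. \<Prod>i\<in>{1..n}. exp (- b i * T i)) = (\<Prod>i\<in>{1..n}. real i / (real i + b i))" .
qed



lemma prod_integral:
  fixes M1 :: "'a measure" and Q :: "'b pmf" and f :: "'a \<Rightarrow> real" and g :: "'b \<Rightarrow> real"
  assumes P: "prob_space M1" and fin: "finite (set_pmf Q)" and fi: "integrable M1 f"
  shows "integrable (M1 \<Otimes>\<^sub>M measure_pmf Q) (\<lambda>\<omega>. f (fst \<omega>) * g (snd \<omega>))"
        "integral\<^sup>L (M1 \<Otimes>\<^sub>M measure_pmf Q) (\<lambda>\<omega>. f (fst \<omega>) * g (snd \<omega>)) = integral\<^sup>L M1 f * measure_pmf.expectation Q g"
proof -
  interpret M1: prob_space M1 by (rule P)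
  interpret pair_sigma_finite M1 "measure_pmf Q"
    by (simp add: M1.sigma_finite_measure_axioms measure_pmf.sigma_finite_measure_axioms pair_sigma_finite_def)
  have fm[measurable]: "f \<in> borel_measurable M1" using fi by auto
  have gm[measurable]: "g \<in> borel_measurable (measure_pmf Q)" by simp
  have gi: "integrable (measure_pmf Q) g" by (rule integrable_measure_pmf_finite[OF fin])
  have gi': "integrable (measure_pmf Q) (\<lambda>y. norm (g y))" by (rule integrable_measure_pmf_finite[OF fin])
  show I: "integrable (M1 \<Otimes>\<^sub>M measure_pmf Q) (\<lambda>\<omega>. f (fst \<omega>) * g (snd \<omega>))"
  proof (rule Fubini_integrable)
    show "(\<lambda>\<omega>. f (fst \<omega>) * g (snd \<omega>)) \<in> borel_measurable (M1 \<Otimes>\<^sub>M measure_pmf Q)"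
      by measurable
    have "(\<lambda>x. \<integral>y. norm (f (fst (x, y)) * g (snd (x, y))) \<partial>measure_pmf Q) = (\<lambda>x. norm (f x) * (\<integral>y. norm (g y) \<partial>measure_pmf Q))"
      by (simp add: abs_mult)
    then show "integrable M1 (\<lambda>x. \<integral>y. norm (f (fst (x, y)) * g (snd (x, y))) \<partial>measure_pmf Q)"
      using fi by simp
    show "AE x in M1. integrable (measure_pmf Q) (\<lambda>y. f (fst (x, y)) * g (snd (x, y)))"
      using gi by simp
  qed
  have "integral\<^sup>L (M1 \<Otimes>\<^sub>M measure_pmf Q) (\<lambda>\<omega>. f (fst \<omega>) * g (snd \<omega>)) =
      (\<integral>x. (\<integral>y. f (fst (x,y)) * g (snd (x,y)) \<partial>measure_pmf Q) \<partial>M1)"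
    using integral_fst'[OF I] by simp
  also have "\<dots> = (\<integral>x. f x * measure_pmf.expectation Q g \<partial>M1)" by simp
  also have "\<dots> = integral\<^sup>L M1 f * measure_pmf.expectation Q g" by simp
  finally show "integral\<^sup>L (M1 \<Otimes>\<^sub>M measure_pmf Q) (\<lambda>\<omega>. f (fst \<omega>) * g (snd \<omega>)) = integral\<^sup>L M1 f * measure_pmf.expectation Q g" .
qed



definition XX :: "real \<Rightarrow> nat \<Rightarrow> (nat \<Rightarrow> real) \<Rightarrow> real" where
  "XX \<alpha> n T = exp (- 2 * \<alpha> * (\<Sum>i\<in>{1..n}. T i))"
definition hh :: "real \<Rightarrow> nat \<Rightarrow> nat \<Rightarrow> (nat \<Rightarrow> real) \<Rightarrow> real" where
  "hh \<alpha> n k T = exp (- 2 * \<alpha> * (\<Sum>i\<in>{k+1..n}. T i))"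
definition phi :: "nat \<Rightarrow> nat \<Rightarrow> (nat \<Rightarrow> nat) \<times> (nat \<Rightarrow> bool \<times> bool) \<Rightarrow> real" where
  "phi n k y = (case y of (c, j) \<Rightarrow>
     (\<Sum>(a, b)\<in>{(a, b). a < b \<and> b < n}. if k \<in> path_nodes c n a b \<and> jump_toward c j n a k then 1 else 0)
       / real (n choose 2))"

lemma path_nodes_sub: "path_nodes c n a b \<subseteq> {1..<n}"
  unfolding path_nodes_def common_nodes_def by auto

lemma Psi_pair_decomp:
  "Psi_pair \<alpha> n T c j a b = (\<Sum>k\<in>{1..<n}. (if k \<in> path_nodes c n a b \<and> jump_toward c j n a k then 1 else 0) * hh \<alpha> n k T)"
proof -
  have "Psi_pair \<alpha> n T c j a b = (\<Sum>k\<in>path_nodes c n a b. (if jump_toward c j n a k then 1 else 0) * hh \<alpha> n k T)"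
    unfolding Psi_pair_def hh_def by simp
  also have "\<dots> = (\<Sum>k\<in>{1..<n}. (if k \<in> path_nodes c n a b then (if jump_toward c j n a k then 1 else 0) * hh \<alpha> n k T else 0))"
    by (subst sum.inter_restrict[symmetric]) (use path_nodes_sub in \<open>auto intro!: sum.cong simp: Int_absorb1\<close>)
  also have "\<dots> = (\<Sum>k\<in>{1..<n}. (if k \<in> path_nodes c n a b \<and> jump_toward c j n a k then 1 else 0) * hh \<alpha> n k T)"
    by (intro sum.cong) auto
  finally show ?thesis .
qed

lemma cond_Psi_decomp:
  "cond_Psi \<alpha> n \<omega> = (\<Sum>k\<in>{1..<n}. phi n k (snd \<omega>) * hh \<alpha> n k (fst \<omega>))"
proof -
  obtain T c j where w: "\<omega> = (T, c, j)" by (cases \<omega>) auto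
  have "cond_Psi \<alpha> n \<omega> = (\<Sum>(a, b)\<in>{(a, b). a < b \<and> b < n}.
      (\<Sum>k\<in>{1..<n}. (if k \<in> path_nodes c n a b \<and> jump_toward c j n a k then 1 else 0) * hh \<alpha> n k T)) / real (n choose 2)"
    unfolding w cond_Psi_def Psi_pair_decomp by simp
  also have "\<dots> = (\<Sum>k\<in>{1..<n}. (\<Sum>(a, b)\<in>{(a, b). a < b \<and> b < n}.
      (if k \<in> path_nodes c n a b \<and> jump_toward c j n a k then 1 else 0) * hh \<alpha> n k T)) / real (n choose 2)"
    by (subst sum.swap) (simp add: case_prod_unfold)
  also have "\<dots> = (\<Sum>k\<in>{1..<n}. phi n k (c, j) * hh \<alpha> n k T)"
    unfolding phi_def by (simp add: sum_divide_distrib sum_distrib_right case_prod_unfold)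
  finally show ?thesis unfolding w by simp
qed



lemma fin_topo: "finite (set_pmf (yule_topo n))"
  unfolding yule_topo_def
proof (rule finite_subset[OF set_Pi_pmf_subset'])
  show "finite (PiE_dflt {1..<n} 0 (set_pmf \<circ> (\<lambda>k. pmf_of_set {..<k})))"
  proof (rule finite_PiE_dflt)
    fix x assume "x \<in> {1..<n}"
    then have "set_pmf (pmf_of_set {..<x}) = {..<x}" by (subst set_pmf_of_set) (auto simp: set_eq_iff intro: exI[of _ 0])
    then show "finite ((set_pmf \<circ> (\<lambda>k. pmf_of_set {..<k})) x)" by simp
  qed simp
qed simp

lemma fin_jumps: "finite (set_pmf (yule_jumps n p))"
  unfolding yule_jumps_def
  by (rule finite_subset[OF set_Pi_pmf_subset']) (auto intro!: finite_PiE_dflt)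

lemma fin_Q: "finite (set_pmf (pair_pmf (yule_topo n) (yule_jumps n p)))"
  by (simp add: set_pair_pmf fin_topo fin_jumps)

lemma XX_prod: "XX \<alpha> n T = (\<Prod>i\<in>{1..n}. exp (- (2*\<alpha>) * T i))"
  unfolding XX_def by (simp add: exp_sum[symmetric] sum_distrib_left)

lemma hh_prod: "hh \<alpha> n k T = (\<Prod>i\<in>{1..n}. exp (- (if k < i then 2*\<alpha> else 0) * T i))"
proof -
  have "(\<Sum>i\<in>{k+1..n}. T i) = (\<Sum>i\<in>{1..n}. if k < i then T i else 0)"
    by (subst sum.inter_filter[symmetric]) (auto intro!: sum.cong)
  then have "- 2 * \<alpha> * (\<Sum>i\<in>{k+1..n}. T i) = (\<Sum>i\<in>{1..n}. - (if k < i then 2*\<alpha> else 0) * T i)"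
    by (simp add: sum_distrib_left, intro sum.cong) auto
  then have "hh \<alpha> n k T = exp (\<Sum>i\<in>{1..n}. - (if k < i then 2*\<alpha> else 0) * T i)"
    unfolding hh_def by simp
  then show ?thesis by (simp add: exp_sum)
qed

lemma XXhh_prod: "XX \<alpha> n T * hh \<alpha> n k T = (\<Prod>i\<in>{1..n}. exp (- (2*\<alpha> + (if k < i then 2*\<alpha> else 0)) * T i))"
  unfolding XX_prod hh_prod prod.distrib[symmetric] by (intro prod.cong) (auto simp: mult_exp_exp algebra_simps)

definition Dk :: "real \<Rightarrow> nat \<Rightarrow> nat \<Rightarrow> real" where
  "Dk \<alpha> n k = integral\<^sup>L (yule_T n) (\<lambda>T. XX \<alpha> n T * hh \<alpha> n k T)
      - integral\<^sup>L (yule_T n) (XX \<alpha> n) * integral\<^sup>L (yule_T n) (hh \<alpha> n k)"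

lemma int_XX: "\<alpha> \<ge> 0 \<Longrightarrow> integrable (yule_T n) (XX \<alpha> n)"
  unfolding XX_prod by (rule yule_T_prod) simp
lemma int_hh: "\<alpha> \<ge> 0 \<Longrightarrow> integrable (yule_T n) (hh \<alpha> n k)"
  unfolding hh_prod by (rule yule_T_prod) simp
lemma int_XXhh: "\<alpha> \<ge> 0 \<Longrightarrow> integrable (yule_T n) (\<lambda>T. XX \<alpha> n T * hh \<alpha> n k T)"
  unfolding XXhh_prod by (rule yule_T_prod) simp

lemma cov_decomp:
  assumes a: "\<alpha> \<ge> 0"
  shows "yule_cov \<alpha> p n = (\<Sum>k\<in>{1..<n}. Dk \<alpha> n k * measure_pmf.expectation (pair_pmf (yule_topo n) (yule_jumps n p)) (phi n k))"
proof -
  let ?Q = "pair_pmf (yule_topo n) (yule_jumps n p)"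
  let ?M = "yule_space n p"
  let ?E = "\<lambda>k. measure_pmf.expectation ?Q (phi n k)"
  have M: "?M = yule_T n \<Otimes>\<^sub>M measure_pmf ?Q" unfolding yule_space_def ..
  note PI = prod_integral[OF yule_T_prob fin_Q]
  have X: "(\<lambda>\<omega>. exp (- 2 * \<alpha> * height n \<omega>)) = (\<lambda>\<omega>. XX \<alpha> n (fst \<omega>) * (\<lambda>_. 1) (snd \<omega>))"
    unfolding XX_def height_def by simp
  have EX: "integral\<^sup>L ?M (\<lambda>\<omega>. exp (- 2 * \<alpha> * height n \<omega>)) = integral\<^sup>L (yule_T n) (XX \<alpha> n)"
    unfolding X M using PI(2)[OF int_XX[OF a], where g="\<lambda>_. 1"] by simp
  have Y: "cond_Psi \<alpha> n = (\<lambda>\<omega>. \<Sum>k\<in>{1..<n}. hh \<alpha> n k (fst \<omega>) * phi n k (snd \<omega>))"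
    by (rule ext) (simp add: cond_Psi_decomp mult.commute)
  have EY: "integral\<^sup>L ?M (cond_Psi \<alpha> n) = (\<Sum>k\<in>{1..<n}. integral\<^sup>L (yule_T n) (hh \<alpha> n k) * ?E k)"
    unfolding Y M
    by (subst Bochner_Integration.integral_sum) (use PI[OF int_hh[OF a]] in auto)
  have XY: "(\<lambda>\<omega>. exp (- 2 * \<alpha> * height n \<omega>) * cond_Psi \<alpha> n \<omega>) =
      (\<lambda>\<omega>. \<Sum>k\<in>{1..<n}. (\<lambda>T. XX \<alpha> n T * hh \<alpha> n k T) (fst \<omega>) * phi n k (snd \<omega>))"
    by (rule ext) (simp add: cond_Psi_decomp XX_def height_def sum_distrib_left algebra_simps)
  have EXY: "integral\<^sup>L ?M (\<lambda>\<omega>. exp (- 2 * \<alpha> * height n \<omega>) * cond_Psi \<alpha> n \<omega>) =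
      (\<Sum>k\<in>{1..<n}. integral\<^sup>L (yule_T n) (\<lambda>T. XX \<alpha> n T * hh \<alpha> n k T) * ?E k)"
    unfolding XY M
    by (subst Bochner_Integration.integral_sum) (use PI[OF int_XXhh[OF a]] in auto)
  show ?thesis
    unfolding yule_cov_def covariance_def EX EY EXY Dk_def
    by (simp add: sum_distrib_left sum_subtractf algebra_simps)
qed



lemma pair_exp:
  fixes h :: "'a \<times> 'b \<Rightarrow> real"
  assumes fA: "finite (set_pmf A)" and fB: "finite (set_pmf B)"
  shows "measure_pmf.expectation (pair_pmf A B) h = measure_pmf.expectation A (\<lambda>a. measure_pmf.expectation B (\<lambda>b. h (a, b)))"
    and "measure_pmf.expectation (pair_pmf A B) h = measure_pmf.expectation B (\<lambda>b. measure_pmf.expectation A (\<lambda>a. h (a, b)))"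
proof -
  have L: "measure_pmf.expectation (pair_pmf A B) h = (\<Sum>x\<in>set_pmf A \<times> set_pmf B. h x * pmf (pair_pmf A B) x)"
    by (rule integral_measure_pmf_real) (use fA fB in \<open>auto simp: set_pair_pmf\<close>)
  have EA: "\<And>g. measure_pmf.expectation A g = (\<Sum>a\<in>set_pmf A. g a * pmf A a)"
    by (rule integral_measure_pmf_real) (use fA in auto)
  have EB: "\<And>g. measure_pmf.expectation B g = (\<Sum>b\<in>set_pmf B. g b * pmf B b)"
    by (rule integral_measure_pmf_real) (use fB in auto)
  have C: "(\<Sum>x\<in>set_pmf A \<times> set_pmf B. h x * pmf (pair_pmf A B) x) =
      (\<Sum>a\<in>set_pmf A. \<Sum>b\<in>set_pmf B. h (a, b) * (pmf A a * pmf B b))"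
    by (subst sum.cartesian_product) (auto simp: pmf_pair case_prod_beta' intro!: sum.cong)
  show "measure_pmf.expectation (pair_pmf A B) h = measure_pmf.expectation A (\<lambda>a. measure_pmf.expectation B (\<lambda>b. h (a, b)))"
    unfolding L EA EB C by (simp add: sum_distrib_left sum_distrib_right mult_ac)
  show "measure_pmf.expectation (pair_pmf A B) h = measure_pmf.expectation B (\<lambda>b. measure_pmf.expectation A (\<lambda>a. h (a, b)))"
    unfolding L EA EB C by (subst sum.swap) (simp add: sum_distrib_left sum_distrib_right mult_ac)
qed

lemma lab_steps_Suc: "lab_steps c (Suc tp) l (Suc i) = lab_steps c tp (parent_label c (Suc tp) l) i"
  by (induction i) auto

lemma lab_steps_cong: "(\<And>m. m \<le> tp \<Longrightarrow> c m = c' m) \<Longrightarrow> lab_steps c tp l i = lab_steps c' tp l i"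
  by (induction i) (auto simp: parent_label_def)

lemma passes_upd:
  assumes k: "1 \<le> k" "k < n"
  shows "passes (f(n := y)) (Suc n) a k = passes f n (if a = n then y else a) k"
proof -
  have e: "Suc n - 1 - (k - 1) = Suc (n - k)" "n - 1 - (k - 1) = n - k" using k by auto
  have n: "n = Suc (n - 1)" using k by auto
  have "tip_label (f(n := y)) (Suc n) a (k - 1) = lab_steps (f(n := y)) n a (Suc (n - k))"
    unfolding tip_label_def e by simp
  also have "\<dots> = lab_steps (f(n := y)) (n - 1) (parent_label (f(n := y)) n a) (n - k)"
    using lab_steps_Suc[of "f(n := y)" "n - 1" a "n - k"] n by simp
  also have "\<dots> = lab_steps f (n - 1) (if a = n then y else a) (n - k)"
  proof -
    have pl: "parent_label (f(n:=y)) n a = (if a = n then y else a)" by (simp add: parent_label_def)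
    show ?thesis unfolding pl by (rule lab_steps_cong) (use k in auto)
  qed
  also have "\<dots> = tip_label f n (if a = n then y else a) (k - 1)"
    unfolding tip_label_def e ..
  finally show ?thesis unfolding passes_def using k by simp
qed

definition pc :: "(nat \<Rightarrow> nat) \<Rightarrow> nat \<Rightarrow> nat \<Rightarrow> real" where
  "pc c n k = (\<Sum>a<n. if passes c n a k then 1 else 0)"

lemma pc_upd:
  assumes k: "1 \<le> k" "k < n"
  shows "pc (f(n := y)) (Suc n) k = pc f n k + (if passes f n y k then 1 else 0)"
proof -
  have "pc (f(n := y)) (Suc n) k = (\<Sum>a<n. if passes (f(n := y)) (Suc n) a k then 1 else 0) + (if passes (f(n := y)) (Suc n) n k then 1 else 0)"
    unfolding pc_def by (rule sum.lessThan_Suc)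
  also have "(\<Sum>a<n. if passes (f(n := y)) (Suc n) a k then 1 else 0) = (\<Sum>a<n. if passes f n a k then 1 else 0)"
    by (intro sum.cong) (use k in \<open>auto simp: passes_upd\<close>)
  finally show ?thesis unfolding pc_def using k by (simp add: passes_upd)
qed

lemma pc_base:
  assumes k: "1 \<le> k" and ck: "c k < k"
  shows "pc c (Suc k) k = 2"
proof -
  have "\<And>a. passes c (Suc k) a k \<longleftrightarrow> a = k \<or> a = c k"
  proof -
    fix a
    have "Suc k - 1 - (k - 1) = Suc 0" using k by auto
    then have "tip_label c (Suc k) a (k - 1) = parent_label c k a"
      unfolding tip_label_def by simp
    then show "passes c (Suc k) a k \<longleftrightarrow> a = k \<or> a = c k"
      unfolding passes_def parent_label_def using ck by auto
  qed
  then have "pc c (Suc k) k = (\<Sum>a<Suc k. if a = k \<or> a = c k then 1 else 0)"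
    unfolding pc_def by simp
  also have "\<dots> = (\<Sum>a<k. if a = k \<or> a = c k then 1 else 0) + 1"
    by (subst sum.lessThan_Suc) simp
  also have "(\<Sum>a<k. if a = k \<or> a = c k then 1 else (0::real)) = (\<Sum>a<k. if a = c k then 1 else 0)"
    by (intro sum.cong) auto
  also have "\<dots> = 1" using ck by (subst sum.delta) auto
  finally show ?thesis by simp
qed



lemma topo_support: assumes "c \<in> set_pmf (yule_topo n)" "k \<in> {1..<n}" shows "c k < k"
proof -
  have "c \<in> PiE_dflt {1..<n} 0 (set_pmf \<circ> (\<lambda>k. pmf_of_set {..<k}))"
    using assms(1) set_Pi_pmf_subset'[of "{1..<n}" 0 "\<lambda>k. pmf_of_set {..<k}"] unfolding yule_topo_def by auto
  then have "c k \<in> set_pmf (pmf_of_set {..<k})" using assms(2) by (auto simp: PiE_dflt_def)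
  moreover have "set_pmf (pmf_of_set {..<k}) = {..<k}" using assms(2)
    by (subst set_pmf_of_set) (auto simp: set_eq_iff intro: exI[of _ 0])
  ultimately show ?thesis by auto
qed

lemma topo_Suc: assumes "1 \<le> n"
  shows "yule_topo (Suc n) = map_pmf (\<lambda>(y, f). f(n := y)) (pair_pmf (pmf_of_set {..<n}) (yule_topo n))"
proof -
  have "{1..<Suc n} = insert n {1..<n}" using assms by auto
  then show ?thesis unfolding yule_topo_def by (simp add: Pi_pmf_insert)
qed

lemma E_pc:
  assumes k: "1 \<le> k" and kn: "k < n"
  shows "measure_pmf.expectation (yule_topo n) (\<lambda>c. pc c n k) = 2 * real n / (real k + 1)"
proof -
  have "Suc k \<le> n" using kn by simp
  then show ?thesis
  proof (induction n rule: nat_induct_at_least)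
    case base
    have "measure_pmf.expectation (yule_topo (Suc k)) (\<lambda>c. pc c (Suc k) k) = measure_pmf.expectation (yule_topo (Suc k)) (\<lambda>c. 2)"
    proof (rule integral_cong_AE)
      show "AE c in measure_pmf (yule_topo (Suc k)). pc c (Suc k) k = 2"
        by (rule AE_pmfI) (rule pc_base[OF k topo_support]; use k in auto)
    qed simp_all
    also have "\<dots> = 2" by simp
    finally show ?case by (simp add: field_simps)
  next
    case (Suc n)
    have n1: "1 \<le> n" "k < n" using Suc k by auto
    let ?U = "pmf_of_set {..<n}"
    have sU: "set_pmf ?U = {..<n}" using n1 by (subst set_pmf_of_set) (auto simp: set_eq_iff intro: exI[of _ 0])
    have fU: "finite (set_pmf ?U)" using sU by simp
    have "measure_pmf.expectation (yule_topo (Suc n)) (\<lambda>c. pc c (Suc n) k)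
        = measure_pmf.expectation (pair_pmf ?U (yule_topo n)) (\<lambda>(y, f). pc (f(n := y)) (Suc n) k)"
      unfolding topo_Suc[OF n1(1)] by (simp add: case_prod_unfold)
    also have "\<dots> = measure_pmf.expectation (pair_pmf ?U (yule_topo n)) (\<lambda>(y, f). pc f n k + (if passes f n y k then 1 else 0))"
      using pc_upd[OF k n1(2)] by (simp add: case_prod_unfold)
    also have "\<dots> = measure_pmf.expectation (yule_topo n) (\<lambda>f. measure_pmf.expectation ?U (\<lambda>y. pc f n k + (if passes f n y k then 1 else 0)))"
      by (subst pair_exp(2)[OF fU fin_topo]) simp
    also have "\<dots> = measure_pmf.expectation (yule_topo n) (\<lambda>f. (1 + 1 / real n) * pc f n k)"
    proof (rule Bochner_Integration.integral_cong[OF refl])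
      fix f
      have "measure_pmf.expectation ?U (\<lambda>y. pc f n k + (if passes f n y k then 1 else 0))
          = (\<Sum>y<n. pc f n k + (if passes f n y k then 1 else 0)) / real n"
        using n1 by (subst integral_pmf_of_set) auto
      also have "\<dots> = (real n * pc f n k + pc f n k) / real n"
        unfolding pc_def by (simp add: sum.distrib)
      also have "\<dots> = (1 + 1 / real n) * pc f n k" using n1 by (simp add: field_simps)
      finally show "measure_pmf.expectation ?U (\<lambda>y. pc f n k + (if passes f n y k then 1 else 0)) = (1 + 1 / real n) * pc f n k" .
    qed
    also have "\<dots> = (1 + 1 / real n) * (2 * real n / (real k + 1))"
      using Suc.IH by simp
    also have "\<dots> = 2 * real (Suc n) / (real k + 1)" using n1 by (simp add: divide_simps)
    finally show ?case .
  qed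
qed



lemma real_choose_two: "real (n choose 2) = real n * (real n - 1) / 2"
proof (cases n)
  case 0 then show ?thesis by simp
next
  case (Suc m)
  have "even (n * (n - 1))" by (cases "even n") auto
  then have "real (n * (n - 1) div 2) = real (n * (n - 1)) / 2" by (simp add: real_of_nat_div)
  then show ?thesis unfolding choose_two using Suc by (simp add: of_nat_diff algebra_simps)
qed

lemma fin_bern: "finite (set_pmf (bernoulli_pmf p))"
  by (rule finite_subset[of _ UNIV]) auto

lemma jump_exp:
  assumes k: "1 \<le> k" "k < n" and p: "0 \<le> p" "p \<le> 1"
  shows "measure_pmf.expectation (yule_jumps n p) (\<lambda>j. if jump_toward c j n a k then 1 else 0) = p"
proof -
  define cnd where "cnd = (tip_label c n a k = k)"
  define g where "g = (\<lambda>x::bool \<times> bool. if (if cnd then snd x else fst x) then 1 else (0::real))"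
  have "(\<lambda>j. if jump_toward c j n a k then 1 else (0::real)) = (\<lambda>j. g (j k))"
    unfolding g_def cnd_def jump_toward_def by simp
  then have "measure_pmf.expectation (yule_jumps n p) (\<lambda>j. if jump_toward c j n a k then 1 else 0)
      = measure_pmf.expectation (map_pmf (\<lambda>j. j k) (yule_jumps n p)) g"
    by simp
  also have "map_pmf (\<lambda>j. j k) (yule_jumps n p) = pair_pmf (bernoulli_pmf p) (bernoulli_pmf p)"
    unfolding yule_jumps_def using k by (subst Pi_pmf_component) auto
  also have "measure_pmf.expectation (pair_pmf (bernoulli_pmf p) (bernoulli_pmf p)) g = p"
    by (subst pair_exp(1)[OF fin_bern fin_bern]) (use p in \<open>simp add: g_def algebra_simps\<close>)
  finally show ?thesis .
qed

definition gsum :: "nat \<Rightarrow> nat \<Rightarrow> (nat \<Rightarrow> nat) \<Rightarrow> (nat \<Rightarrow> bool \<times> bool) \<Rightarrow> real" where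
  "gsum n k c j = (\<Sum>a<n. (if passes c n a k then 1 else 0) * (if jump_toward c j n a k then 1 else 0))"

lemma phi_le:
  shows "phi n k (c, j) \<le> real n / real (n choose 2) * gsum n k c j"
proof -
  let ?P = "{(a, b). a < b \<and> b < n}"
  let ?g = "\<lambda>a. (if passes c n a k then 1 else 0) * (if jump_toward c j n a k then 1 else (0::real))"
  have "(\<Sum>(a, b)\<in>?P. if k \<in> path_nodes c n a b \<and> jump_toward c j n a k then 1 else (0::real))
      \<le> (\<Sum>(a, b)\<in>?P. ?g a)"
    by (intro sum_mono) (auto simp: path_nodes_def common_nodes_def)
  also have "\<dots> \<le> (\<Sum>(a, b)\<in>{..<n} \<times> {..<n}. ?g a)"
    by (intro sum_mono2) auto
  also have "\<dots> = real n * gsum n k c j"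
    unfolding gsum_def by (subst sum.cartesian_product[symmetric]) (simp add: sum_distrib_left)
  finally have "(\<Sum>(a, b)\<in>?P. if k \<in> path_nodes c n a b \<and> jump_toward c j n a k then 1 else (0::real)) \<le> real n * gsum n k c j" .
  then show ?thesis unfolding phi_def by (simp add: divide_right_mono)
qed

lemma q_bound:
  assumes k: "1 \<le> k" "k < n" and p: "0 \<le> p" "p \<le> 1"
  shows "0 \<le> measure_pmf.expectation (pair_pmf (yule_topo n) (yule_jumps n p)) (phi n k)"
    and "measure_pmf.expectation (pair_pmf (yule_topo n) (yule_jumps n p)) (phi n k) \<le> 8 * p / real k"
proof -
  let ?Q = "pair_pmf (yule_topo n) (yule_jumps n p)"
  show "0 \<le> measure_pmf.expectation ?Q (phi n k)"
    by (intro Bochner_Integration.integral_nonneg) (auto simp: phi_def case_prod_unfold intro!: divide_nonneg_nonneg sum_nonneg)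
  have "measure_pmf.expectation ?Q (phi n k) \<le> measure_pmf.expectation ?Q (\<lambda>y. real n / real (n choose 2) * gsum n k (fst y) (snd y))"
    by (intro integral_mono integrable_measure_pmf_finite fin_Q) (use phi_le in \<open>auto simp: case_prod_unfold\<close>)
  also have "\<dots> = real n / real (n choose 2) * measure_pmf.expectation ?Q (\<lambda>y. gsum n k (fst y) (snd y))"
    by simp
  also have "measure_pmf.expectation ?Q (\<lambda>y. gsum n k (fst y) (snd y)) =
      measure_pmf.expectation (yule_topo n) (\<lambda>c. measure_pmf.expectation (yule_jumps n p) (\<lambda>j. gsum n k c j))"
    by (subst pair_exp(1)[OF fin_topo fin_jumps]) simp
  also have "\<dots> = measure_pmf.expectation (yule_topo n) (\<lambda>c. p * pc c n k)"
  proof (rule Bochner_Integration.integral_cong[OF refl])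
    fix c
    have "measure_pmf.expectation (yule_jumps n p) (\<lambda>j. gsum n k c j)
        = (\<Sum>a<n. (if passes c n a k then 1 else 0) * measure_pmf.expectation (yule_jumps n p) (\<lambda>j. if jump_toward c j n a k then 1 else 0))"
      unfolding gsum_def
      by (subst Bochner_Integration.integral_sum) (auto intro: integrable_measure_pmf_finite fin_jumps)
    also have "\<dots> = p * pc c n k"
      unfolding pc_def using jump_exp[OF k p] by (simp add: sum_distrib_left mult.commute)
    finally show "measure_pmf.expectation (yule_jumps n p) (\<lambda>j. gsum n k c j) = p * pc c n k" .
  qed
  also have "\<dots> = p * (2 * real n / (real k + 1))" using E_pc[OF k] by simp
  finally have le: "measure_pmf.expectation ?Q (phi n k) \<le> real n / real (n choose 2) * (p * (2 * real n / (real k + 1)))" .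
  have n2: "real n \<ge> 2" using k by simp
  have "real n / real (n choose 2) * (p * (2 * real n / (real k + 1))) = p * (4 * (real n / (real n - 1)) / (real k + 1))"
  proof -
    have "real n - 1 > 0" "real n > 0" "real k + 1 > 0" using n2 by auto
    then show ?thesis unfolding real_choose_two by (simp add: divide_simps)
  qed
  also have "\<dots> \<le> p * (4 * 2 / real k)"
  proof (intro mult_left_mono p)
    have "real n / (real n - 1) \<le> 2" using n2 by (simp add: divide_simps)
    then have "4 * (real n / (real n - 1)) \<le> 4 * 2" by simp
    moreover have "real k \<le> real k + 1" by simp
    ultimately show "4 * (real n / (real n - 1)) / (real k + 1) \<le> 4 * 2 / real k"
      using k by (intro frac_le) auto
  qed
  finally have "real n / real (n choose 2) * (p * (2 * real n / (real k + 1))) \<le> 8 * p / real k" by (simp add: mult.commute)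
  with le show "measure_pmf.expectation ?Q (phi n k) \<le> 8 * p / real k" by linarith
qed



lemma ln_lower: assumes "(0::real) \<le> x" shows "x / (1 + x) \<le> ln (1 + x)"
proof -
  have "ln (1 / (1 + x)) \<le> 1 / (1 + x) - 1" using assms by (intro ln_le_minus_one) simp
  moreover have "ln (1 / (1 + x)) = - ln (1 + x)" using assms by (simp add: ln_div)
  moreover have "1 / (1 + x) - 1 = - (x / (1 + x))" using assms by (simp add: field_simps)
  ultimately show ?thesis by simp
qed

lemma harm_bound: "m \<ge> 1 \<Longrightarrow> (\<Sum>i\<in>{1..m}. 1 / real i) \<le> 1 + ln (real m)"
proof (induction m rule: nat_induct_at_least)
  case base then show ?case by simp
next
  case (Suc m)
  have "1 / real (Suc m) = (1 / real m) / (1 + 1 / real m)" using Suc by (simp add: field_simps)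
  also have "\<dots> \<le> ln (1 + 1 / real m)" by (rule ln_lower) simp
  also have "ln (1 + 1 / real m) = ln (real (Suc m)) - ln (real m)"
  proof -
    have "1 + 1 / real m = real (Suc m) / real m" using Suc by (simp add: field_simps)
    then show ?thesis using Suc by (simp add: ln_div)
  qed
  finally have "1 / real (Suc m) \<le> ln (real (Suc m)) - ln (real m)" .
  then show ?case using Suc by simp
qed

lemma S_upper: assumes b: "(0::real) \<le> \<beta>" and m: "m \<ge> 1"
  shows "(\<Sum>i\<in>{1..m}. ln (1 + \<beta> / real i)) \<le> \<beta> * (1 + ln (real m))"
proof -
  have "(\<Sum>i\<in>{1..m}. ln (1 + \<beta> / real i)) \<le> (\<Sum>i\<in>{1..m}. \<beta> * (1 / real i))"
    by (intro sum_mono) (use b in \<open>auto intro!: ln_add_one_self_le_self\<close>)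
  also have "\<dots> = \<beta> * (\<Sum>i\<in>{1..m}. 1 / real i)" by (simp add: sum_distrib_left)
  also have "\<dots> \<le> \<beta> * (1 + ln (real m))" using harm_bound[OF m] b by (intro mult_left_mono) auto
  finally show ?thesis .
qed

lemma S_lower_aux:
  assumes b: "(0::real) \<le> \<beta>" and m: "m \<ge> 1"
  shows "\<beta> * ln (real m) - \<beta> * (1 + \<beta>) * (1 - 1 / real m) \<le> (\<Sum>i\<in>{1..m}. ln (1 + \<beta> / real i))"
  using m
proof (induction m rule: nat_induct_at_least)
  case base then show ?case using b by simp
next
  case (Suc m)
  have m0: "real m \<ge> 1" using Suc by simp
  have l1: "ln (real (Suc m)) - ln (real m) \<le> 1 / real m"
  proof -
    have "1 + 1 / real m = real (Suc m) / real m" using m0 by (simp add: field_simps)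
    then have "ln (real (Suc m)) - ln (real m) = ln (1 + 1 / real m)"
      using m0 by (simp add: ln_div)
    also have "\<dots> \<le> 1 / real m" by (rule ln_add_one_self_le_self) simp
    finally show ?thesis .
  qed
  have l2: "\<beta> / (real (Suc m) + \<beta>) \<le> ln (1 + \<beta> / real (Suc m))"
  proof -
    have p1: "0 < real (Suc m) + \<beta>" using b by simp
    have "\<beta> / (real (Suc m) + \<beta>) = (\<beta> / real (Suc m)) / (1 + \<beta> / real (Suc m))"
      using p1 by (simp add: divide_simps del: of_nat_Suc)
    also have "\<dots> \<le> ln (1 + \<beta> / real (Suc m))" by (rule ln_lower) (use b in simp)
    finally show ?thesis .
  qed
  have alg: "\<beta> / real m - \<beta> * (1 + \<beta>) * (1 / real m - 1 / real (Suc m)) \<le> \<beta> / (real (Suc m) + \<beta>)"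
  proof -
    have "\<beta> / real m - \<beta> * (1 + \<beta>) * (1 / real m - 1 / real (Suc m)) = \<beta> * (real m - \<beta>) / (real m * (real m + 1))"
      using m0 by (simp add: divide_simps) (simp add: algebra_simps)
    also have "\<dots> \<le> \<beta> / (real m + 1 + \<beta>)"
    proof -
      have "(real m - \<beta>) * (real m + 1 + \<beta>) \<le> real m * (real m + 1)"
        using b by (simp add: algebra_simps)
      then have "\<beta> * ((real m - \<beta>) * (real m + 1 + \<beta>)) \<le> \<beta> * (real m * (real m + 1))"
        using b by (rule mult_left_mono)
      moreover have p: "0 < real m * (real m+1)" "0 < real m + 1 + \<beta>" using m0 b by auto
      ultimately show ?thesis by (simp add: divide_le_eq le_divide_eq mult.commute mult.left_commute)
    qed
    finally show ?thesis by (simp add: add.commute add.left_commute)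
  qed
  have "\<beta> * ln (real (Suc m)) - \<beta> * (1 + \<beta>) * (1 - 1 / real (Suc m))
     = (\<beta> * ln (real m) - \<beta> * (1 + \<beta>) * (1 - 1 / real m))
       + \<beta> * (ln (real (Suc m)) - ln (real m)) - \<beta> * (1 + \<beta>) * (1 / real m - 1 / real (Suc m))"
    by (simp add: algebra_simps)
  also have "\<dots> \<le> (\<Sum>i\<in>{1..m}. ln (1 + \<beta> / real i)) + \<beta> / real m - \<beta> * (1 + \<beta>) * (1 / real m - 1 / real (Suc m))"
  proof -
    have "\<beta> * (ln (real (Suc m)) - ln (real m)) \<le> \<beta> * (1 / real m)" by (rule mult_left_mono[OF l1 b])
    then have "\<beta> * (ln (real (Suc m)) - ln (real m)) \<le> \<beta> / real m" by simp
    then show ?thesis using Suc.IH by linarith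
  qed
  also have "\<dots> \<le> (\<Sum>i\<in>{1..m}. ln (1 + \<beta> / real i)) + ln (1 + \<beta> / real (Suc m))"
    using alg l2 by simp
  also have "\<dots> = (\<Sum>i\<in>{1..Suc m}. ln (1 + \<beta> / real i))" by simp
  finally show ?case .
qed

lemma prod_exp: assumes b: "(0::real) \<le> \<beta>"
  shows "(\<Prod>i\<in>{1..m}. real i / (real i + \<beta>)) = exp (- (\<Sum>i\<in>{1..m}. ln (1 + \<beta> / real i)))"
proof -
  have "\<And>i. i \<in> {1..m} \<Longrightarrow> real i / (real i + \<beta>) = exp (- ln (1 + \<beta> / real i))"
  proof -
    fix i :: nat assume "i \<in> {1..m}"
    then have i: "real i \<ge> 1" by auto
    have pos: "0 < 1 + \<beta> / real i" using i b by (simp add: add_pos_nonneg)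
    have "exp (- ln (1 + \<beta> / real i)) = 1 / (1 + \<beta> / real i)"
      using pos by (simp add: exp_minus inverse_eq_divide)
    also have "\<dots> = real i / (real i + \<beta>)" using i b by (simp add: field_simps)
    finally show "real i / (real i + \<beta>) = exp (- ln (1 + \<beta> / real i))" by simp
  qed
  then have "(\<Prod>i\<in>{1..m}. real i / (real i + \<beta>)) = (\<Prod>i\<in>{1..m}. exp (- ln (1 + \<beta> / real i)))"
    by (rule prod.cong[OF refl])
  also have "\<dots> = exp (- (\<Sum>i\<in>{1..m}. ln (1 + \<beta> / real i)))"
    by (simp add: exp_sum[symmetric] sum_negf)
  finally show ?thesis .
qed

lemma P_upper: assumes b: "(0::real) \<le> \<beta>" and m: "m \<ge> 1"
  shows "(\<Prod>i\<in>{1..m}. real i / (real i + \<beta>)) \<le> exp (\<beta> * (1 + \<beta>)) * real m powr (- \<beta>)"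
proof -
  have "\<beta> * ln (real m) - \<beta> * (1 + \<beta>) \<le> \<beta> * ln (real m) - \<beta> * (1 + \<beta>) * (1 - 1 / real m)"
    using b m by (simp add: mult_left_le)
  also have "\<dots> \<le> (\<Sum>i\<in>{1..m}. ln (1 + \<beta> / real i))" by (rule S_lower_aux[OF b m])
  finally have h: "\<beta> * ln (real m) - \<beta> * (1 + \<beta>) \<le> (\<Sum>i\<in>{1..m}. ln (1 + \<beta> / real i))" .
  have "(\<Prod>i\<in>{1..m}. real i / (real i + \<beta>)) \<le> exp (- (\<beta> * ln (real m) - \<beta> * (1 + \<beta>)))"
    unfolding prod_exp[OF b] using h by simp
  also have "\<dots> = exp (\<beta> * (1 + \<beta>)) * real m powr (- \<beta>)"
    using m by (simp add: powr_def mult_exp_exp algebra_simps)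
  finally show ?thesis .
qed

lemma P_lower: assumes b: "(0::real) \<le> \<beta>" and m: "m \<ge> 1"
  shows "exp (- \<beta>) * real m powr (- \<beta>) \<le> (\<Prod>i\<in>{1..m}. real i / (real i + \<beta>))"
proof -
  have "exp (- \<beta>) * real m powr (- \<beta>) = exp (- (\<beta> * (1 + ln (real m))))"
    using m by (simp add: powr_def mult_exp_exp algebra_simps)
  also have "\<dots> \<le> exp (- (\<Sum>i\<in>{1..m}. ln (1 + \<beta> / real i)))"
    using S_upper[OF b m] by simp
  finally show ?thesis unfolding prod_exp[OF b] .
qed



lemma inv_sq_sum: assumes k: "1 \<le> k" and kn: "k \<le> n"
  shows "(\<Sum>i\<in>{k<..n}. 1 / (real i)^2) \<le> 1 / real k - 1 / real n"
  using kn
proof (induction n rule: nat_induct_at_least)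
  case base then show ?case by simp
next
  case (Suc n)
  have n1: "real n \<ge> 1" using Suc k by simp
  have "{k<..Suc n} = insert (Suc n) {k<..n}" using Suc by auto
  then have "(\<Sum>i\<in>{k<..Suc n}. 1 / (real i)^2) = 1 / (real (Suc n))^2 + (\<Sum>i\<in>{k<..n}. 1 / (real i)^2)"
    by simp
  also have "\<dots> \<le> 1 / (real (Suc n))^2 + (1 / real k - 1 / real n)" using Suc.IH by simp
  also have "\<dots> \<le> 1 / real k - 1 / real (Suc n)"
  proof -
    have "1 / (real (Suc n))^2 \<le> 1 / real n - 1 / real (Suc n)"
      using n1 by (simp add: divide_simps power2_eq_square)
    then show ?thesis by simp
  qed
  finally show ?case .
qed

lemma expm1_le: assumes "(0::real) \<le> y" shows "exp y - 1 \<le> y * exp y"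
proof -
  have "1 - y \<le> exp (- y)" using exp_ge_add_one_self[of "-y"] by simp
  then have "(1 - y) * exp y \<le> exp (- y) * exp y" by (rule mult_right_mono) simp
  then show ?thesis by (simp add: exp_minus field_simps)
qed

lemma prod_1x_le: assumes "finite S" "\<And>i. i \<in> S \<Longrightarrow> (0::real) \<le> x i"
  shows "(\<Prod>i\<in>S. 1 + x i) \<le> exp (\<Sum>i\<in>S. x i)"
proof -
  have "(\<Prod>i\<in>S. 1 + x i) \<le> (\<Prod>i\<in>S. exp (x i))"
    by (intro prod_mono) (use assms in auto)
  also have "\<dots> = exp (\<Sum>i\<in>S. x i)" using assms(1) by (simp add: exp_sum)
  finally show ?thesis .
qed

definition KK :: "real \<Rightarrow> real" where
  "KK \<beta> = \<beta>^2 * exp (\<beta>^2) * exp (2 * (\<beta> * (1 + \<beta>))) * exp \<beta>"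

lemma D_bound:
  assumes b: "(0::real) \<le> \<beta>" and k: "1 \<le> k" and kn: "k \<le> n"
  shows "(\<Prod>i\<in>{1..n}. real i / (real i + (\<beta> + (if k < i then \<beta> else 0))))
       - (\<Prod>i\<in>{1..n}. real i / (real i + \<beta>)) * (\<Prod>i\<in>{1..n}. real i / (real i + (if k < i then \<beta> else 0)))
       \<le> KK \<beta> * real k powr (\<beta> - 1) * real n powr (- 2 * \<beta>)"
proof -
  define A where "A = (\<Prod>i\<in>{1..k}. real i / (real i + \<beta>))"
  define E where "E = (\<Prod>i\<in>{k<..n}. real i / (real i + \<beta>))"
  define B where "B = (\<Prod>i\<in>{k<..n}. real i / (real i + 2 * \<beta>))"
  define F where "F = (\<Prod>i\<in>{k<..n}. 1 + \<beta>^2 / (real i * (real i + 2 * \<beta>)))"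
  have U: "{1..n} = {1..k} \<union> {k<..n}" and D: "{1..k} \<inter> {k<..n} = {}" using k kn by auto
  have split: "\<And>f. (\<Prod>i\<in>{1..n}. f i) = (\<Prod>i\<in>{1..k}. f i) * (\<Prod>i\<in>{k<..n}. f i :: real)"
    unfolding U by (rule prod.union_disjoint) (use D in auto)
  have I1: "(\<Prod>i\<in>{1..n}. real i / (real i + (\<beta> + (if k < i then \<beta> else 0)))) = A * B"
    unfolding split A_def B_def by (intro arg_cong2[where f="(*)"] prod.cong) auto
  have IX: "(\<Prod>i\<in>{1..n}. real i / (real i + \<beta>)) = A * E"
    unfolding split A_def E_def ..
  have Ih: "(\<Prod>i\<in>{1..n}. real i / (real i + (if k < i then \<beta> else 0))) = E"
  proof -
    have "(\<Prod>i\<in>{1..k}. real i / (real i + (if k < i then \<beta> else 0))) = 1"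
      by (intro prod.neutral) auto
    moreover have "(\<Prod>i\<in>{k<..n}. real i / (real i + (if k < i then \<beta> else 0))) = E"
      unfolding E_def by (intro prod.cong) auto
    ultimately show ?thesis unfolding split by simp
  qed
  have BEF: "B = E * E * F"
  proof -
    have "\<And>i. i \<in> {k<..n} \<Longrightarrow> real i / (real i + 2 * \<beta>) =
        (real i / (real i + \<beta>)) * (real i / (real i + \<beta>)) * (1 + \<beta>^2 / (real i * (real i + 2 * \<beta>)))"
    proof -
      fix i assume "i \<in> {k<..n}"
      then have i: "real i \<ge> 1" using k by auto
      have p: "0 < real i + \<beta>" "0 < real i + 2 * \<beta>" "0 < real i" using i b by auto
      then show "real i / (real i + 2 * \<beta>) =
        (real i / (real i + \<beta>)) * (real i / (real i + \<beta>)) * (1 + \<beta>^2 / (real i * (real i + 2 * \<beta>)))"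
        by (simp add: divide_simps power2_eq_square) (simp add: algebra_simps)
    qed
    then have "B = (\<Prod>i\<in>{k<..n}. (real i / (real i + \<beta>)) * (real i / (real i + \<beta>)) * (1 + \<beta>^2 / (real i * (real i + 2 * \<beta>))))"
      unfolding B_def by (rule prod.cong[OF refl])
    then show ?thesis by (simp only: prod.distrib E_def F_def)
  qed
  have E0: "0 \<le> E" unfolding E_def by (intro prod_nonneg) (use b in auto)
  have Apos: "0 < A" unfolding A_def by (intro prod_pos) (use b in auto)
  have k1: "real k \<ge> 1" using k by simp
  have Fb: "F - 1 \<le> \<beta>^2 * exp (\<beta>^2) / real k"
  proof -
    have "F \<le> exp (\<Sum>i\<in>{k<..n}. \<beta>^2 / (real i * (real i + 2 * \<beta>)))"
      unfolding F_def by (rule prod_1x_le) (use b in auto)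
    also have "(\<Sum>i\<in>{k<..n}. \<beta>^2 / (real i * (real i + 2 * \<beta>))) \<le> (\<Sum>i\<in>{k<..n}. \<beta>^2 * (1 / (real i)^2))"
    proof (intro sum_mono)
      fix i assume "i \<in> {k<..n}"
      then have i: "real i \<ge> 1" using k by auto
      have "real i * real i \<le> real i * (real i + 2 * \<beta>)" using i b by (intro mult_left_mono) auto
      then have "1 / (real i * (real i + 2 * \<beta>)) \<le> 1 / (real i)^2"
        using i by (intro divide_left_mono) (auto simp: power2_eq_square)
      then show "\<beta>^2 / (real i * (real i + 2 * \<beta>)) \<le> \<beta>^2 * (1 / (real i)^2)"
        using mult_left_mono[of _ _ "\<beta>^2"] by (simp add: divide_inverse)
    qed
    also have "\<dots> = \<beta>^2 * (\<Sum>i\<in>{k<..n}. 1 / (real i)^2)" by (simp add: sum_distrib_left)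
    also have "\<dots> \<le> \<beta>^2 * (1 / real k)"
    proof -
      have "0 \<le> 1 / real n" by simp
      then have "(\<Sum>i\<in>{k<..n}. 1 / (real i)^2) \<le> 1 / real k" using inv_sq_sum[OF k kn] by linarith
      then show ?thesis by (intro mult_left_mono) auto
    qed
    finally have F1: "F \<le> exp (\<beta>^2 / real k)" by simp
    have "exp (\<beta>^2 / real k) - 1 \<le> \<beta>^2 / real k * exp (\<beta>^2 / real k)"
      by (rule expm1_le) simp
    also have "\<dots> \<le> \<beta>^2 / real k * exp (\<beta>^2)"
    proof -
      have "\<beta>^2 * 1 \<le> \<beta>^2 * real k" using k1 by (intro mult_left_mono) auto
      then have "\<beta>^2 / real k \<le> \<beta>^2" using k1 by (simp add: divide_le_eq)
      then show ?thesis by (intro mult_left_mono) auto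
    qed
    finally show ?thesis using F1 by simp
  qed
  have PA: "A * E \<le> exp (\<beta> * (1 + \<beta>)) * real n powr (- \<beta>)"
    using P_upper[OF b, of n] k kn IX by simp
  have AE0: "0 \<le> A * E" using Apos E0 by simp
  have AL: "exp (- \<beta>) * real k powr (- \<beta>) \<le> A" unfolding A_def by (rule P_lower[OF b k])
  have c1: "A * B - A * E * E \<le> A * E * E * (\<beta>^2 * exp (\<beta>^2) / real k)"
  proof -
    have "A * B - A * E * E = A * E * E * (F - 1)" unfolding BEF by (simp add: algebra_simps)
    also have "\<dots> \<le> A * E * E * (\<beta>^2 * exp (\<beta>^2) / real k)"
      using Fb Apos E0 by (intro mult_left_mono) auto
    finally show ?thesis .
  qed
  have c2: "A * E * E \<le> (exp (\<beta> * (1 + \<beta>)) * real n powr (- \<beta>))^2 / (exp (- \<beta>) * real k powr (- \<beta>))"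
  proof -
    have "A * E * E = (A * E)^2 / A" using Apos by (simp add: power2_eq_square)
    also have "(A * E)^2 / A \<le> (exp (\<beta> * (1 + \<beta>)) * real n powr (- \<beta>))^2 / (exp (- \<beta>) * real k powr (- \<beta>))"
    proof (rule frac_le)
      show "0 \<le> (exp (\<beta> * (1 + \<beta>)) * real n powr - \<beta>)\<^sup>2" by simp
      show "(A * E)\<^sup>2 \<le> (exp (\<beta> * (1 + \<beta>)) * real n powr - \<beta>)\<^sup>2"
        using PA AE0 by (rule power_mono)
      show "0 < exp (- \<beta>) * real k powr - \<beta>" using k1 by simp
      show "exp (- \<beta>) * real k powr - \<beta> \<le> A" by (rule AL)
    qed
    finally show ?thesis .
  qed
  have main: "A * B - A * E * E \<le> (exp (\<beta> * (1 + \<beta>)) * real n powr - \<beta>)\<^sup>2 / (exp (- \<beta>) * real k powr - \<beta>) * (\<beta>\<^sup>2 * exp (\<beta>\<^sup>2) / real k)"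
    using c1 mult_right_mono[OF c2, of "\<beta>\<^sup>2 * exp (\<beta>\<^sup>2) / real k"] by simp
  have "(exp (\<beta> * (1 + \<beta>)) * real n powr - \<beta>)\<^sup>2 / (exp (- \<beta>) * real k powr - \<beta>) * (\<beta>\<^sup>2 * exp (\<beta>\<^sup>2) / real k)
      = KK \<beta> * real k powr (\<beta> - 1) * real n powr (- 2 * \<beta>)"
  proof -
    have n1: "real n > 0" using k kn by simp
    have f1: "(real n powr - \<beta>)^2 = real n powr (- 2 * \<beta>)"
      using n1 by (simp add: power2_eq_square powr_add[symmetric])
    have f2: "exp (\<beta> * (1 + \<beta>))^2 = exp (2 * (\<beta> * (1 + \<beta>)))"
      by (simp add: power2_eq_square mult_exp_exp)
    have f3: "1 / (real k powr - \<beta>) / real k = real k powr (\<beta> - 1)"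
      using k1 by (simp add: powr_minus powr_diff divide_simps)
    have f4: "1 / exp (- \<beta>) = exp \<beta>" by (simp add: exp_minus divide_inverse)
    have gen: "\<And>x y z w c (kk::real). z \<noteq> 0 \<Longrightarrow> w \<noteq> 0 \<Longrightarrow> kk \<noteq> 0 \<Longrightarrow>
        (x*y)^2/(z*w)*(c/kk) = x^2*y^2*(1/z)*(1/w/kk)*c"
      by (simp add: power2_eq_square field_simps)
    have "(exp (\<beta> * (1 + \<beta>)) * real n powr - \<beta>)\<^sup>2 / (exp (- \<beta>) * real k powr - \<beta>) * (\<beta>\<^sup>2 * exp (\<beta>\<^sup>2) / real k)
       = exp (\<beta> * (1 + \<beta>))^2 * (real n powr - \<beta>)^2 * (1 / exp (- \<beta>)) * (1 / (real k powr - \<beta>) / real k) * (\<beta>\<^sup>2 * exp (\<beta>\<^sup>2))"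
      by (rule gen) (use k1 in auto)
    also have "\<dots> = KK \<beta> * real k powr (\<beta> - 1) * real n powr (- 2 * \<beta>)"
      unfolding f1 f2 f3 f4 KK_def by (simp add: algebra_simps)
    finally show ?thesis .
  qed
  with main show ?thesis unfolding I1 IX Ih by simp
qed



lemma sum_powr_small:
  assumes g: "\<gamma> < -1"
  shows "(\<Sum>k\<in>{1..<n}. real k powr \<gamma>) \<le> suminf (\<lambda>k. real k powr \<gamma>)"
  by (rule sum_le_suminf) (use g summable_real_powr_iff in auto)

lemma sum_powr_harm:
  assumes n: "n \<ge> 1"
  shows "(\<Sum>k\<in>{1..<n}. real k powr (-1)) \<le> 1 + ln (real n)"
proof -
  have "(\<Sum>k\<in>{1..<n}. real k powr (-1)) \<le> (\<Sum>k\<in>{1..n}. real k powr (-1))"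
    by (intro sum_mono2) auto
  also have "\<dots> = (\<Sum>k\<in>{1..n}. 1 / real k)"
    by (intro sum.cong) (auto simp: powr_minus_divide)
  also have "\<dots> \<le> 1 + ln (real n)" by (rule harm_bound[OF n])
  finally show ?thesis .
qed

lemma young_step:
  assumes s: "0 < s" "s < 1" and m: "(1::real) \<le> m"
  shows "s * (m + 1) powr (s - 1) \<le> (m + 1) powr s - m powr s"
proof -
  have "(m / (m + 1)) powr s * 1 powr (1 - s) \<le> s * (m / (m + 1)) + (1 - s) * 1"
    by (rule Youngs_inequality_0) (use s m in auto)
  then have "m powr s / (m + 1) powr s \<le> 1 - s / (m + 1)"
    using m by (simp add: powr_divide field_simps)
  then have "m powr s \<le> (1 - s / (m + 1)) * (m + 1) powr s"
    using m by (simp add: divide_le_eq)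
  also have "\<dots> = (m + 1) powr s - s * ((m + 1) powr s / (m + 1))"
    by (simp add: algebra_simps)
  also have "(m + 1) powr s / (m + 1) = (m + 1) powr (s - 1)"
    using m by (simp add: powr_diff)
  finally show ?thesis by simp
qed

lemma sum_powr_big1:
  assumes s: "0 < s" "s < 1" and m: "m \<ge> 1"
  shows "(\<Sum>k\<in>{1..m}. real k powr (s - 1)) \<le> real m powr s / s"
  using m
proof (induction m rule: nat_induct_at_least)
  case base then show ?case using s by simp
next
  case (Suc m)
  have "(\<Sum>k\<in>{1..Suc m}. real k powr (s - 1)) = (\<Sum>k\<in>{1..m}. real k powr (s - 1)) + real (Suc m) powr (s - 1)"
    by simp
  also have "\<dots> \<le> real m powr s / s + real (Suc m) powr (s - 1)" using Suc.IH by simp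
  also have "\<dots> \<le> real (Suc m) powr s / s"
  proof -
    have "s * (real m + 1) powr (s - 1) \<le> (real m + 1) powr s - real m powr s"
      by (rule young_step[OF s]) (use Suc in simp)
    then have "real (Suc m) powr (s - 1) \<le> (real (Suc m) powr s - real m powr s) / s"
      using s by (simp add: le_divide_eq mult.commute add.commute)
    then show ?thesis by (simp add: diff_divide_distrib)
  qed
  finally show ?case .
qed

lemma sum_powr_big:
  assumes s: "0 < s" and n: "n \<ge> 1"
  shows "(\<Sum>k\<in>{1..<n}. real k powr (s - 1)) \<le> (1 + 1 / s) * real n powr s"
proof -
  have "(\<Sum>k\<in>{1..<n}. real k powr (s - 1)) \<le> (\<Sum>k\<in>{1..n}. real k powr (s - 1))"
    by (intro sum_mono2) auto
  also have "\<dots> \<le> (1 + 1 / s) * real n powr s"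
  proof (cases "s < 1")
    case True
    have "(\<Sum>k\<in>{1..n}. real k powr (s - 1)) \<le> real n powr s / s" by (rule sum_powr_big1[OF s True n])
    also have "\<dots> \<le> (1 + 1 / s) * real n powr s" using s by (simp add: field_simps)
    finally show ?thesis .
  next
    case False
    have "(\<Sum>k\<in>{1..n}. real k powr (s - 1)) \<le> (\<Sum>k\<in>{1..n}. real n powr (s - 1))"
      by (intro sum_mono powr_mono2) (use False in auto)
    also have "\<dots> = real n * real n powr (s - 1)" by simp
    also have "\<dots> = real n powr s" using n by (simp add: powr_diff field_simps)
    also have "\<dots> \<le> (1 + 1 / s) * real n powr s" using s by (simp add: field_simps)
    finally show ?thesis .
  qed
  finally show ?thesis .
qed



lemma Dk_bound:
  assumes a: "\<alpha> > 0" and k: "1 \<le> k" "k < n"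
  shows "Dk \<alpha> n k \<le> KK (2 * \<alpha>) * real k powr (2 * \<alpha> - 1) * real n powr (- 4 * \<alpha>)"
proof -
  have b0: "0 \<le> 2 * \<alpha>" using a by simp
  have i1: "integral\<^sup>L (yule_T n) (\<lambda>T. XX \<alpha> n T * hh \<alpha> n k T) =
      (\<Prod>i\<in>{1..n}. real i / (real i + (2 * \<alpha> + (if k < i then 2 * \<alpha> else 0))))"
    unfolding XXhh_prod by (rule yule_T_prod(2)) (use a in auto)
  have i2: "integral\<^sup>L (yule_T n) (XX \<alpha> n) = (\<Prod>i\<in>{1..n}. real i / (real i + 2 * \<alpha>))"
    unfolding XX_prod by (rule yule_T_prod(2)) (use a in auto)
  have i3: "integral\<^sup>L (yule_T n) (hh \<alpha> n k) = (\<Prod>i\<in>{1..n}. real i / (real i + (if k < i then 2 * \<alpha> else 0)))"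
    unfolding hh_prod by (rule yule_T_prod(2)) (use a in auto)
  have "Dk \<alpha> n k \<le> KK (2 * \<alpha>) * real k powr (2 * \<alpha> - 1) * real n powr (- 2 * (2 * \<alpha>))"
    unfolding Dk_def i1 i2 i3 by (rule D_bound[OF b0 k(1)]) (use k in simp)
  then show ?thesis by simp
qed

lemma KK_nonneg: "0 \<le> KK b" unfolding KK_def by simp

lemma cov_bound:
  assumes a: "\<alpha> > 0" and p: "0 \<le> p" "p \<le> 1"
  shows "yule_cov \<alpha> p n \<le> 8 * p * KK (2 * \<alpha>) * real n powr (- 4 * \<alpha>) * (\<Sum>k\<in>{1..<n}. real k powr (2 * \<alpha> - 2))"
proof -
  let ?q = "\<lambda>k. measure_pmf.expectation (pair_pmf (yule_topo n) (yule_jumps n p)) (phi n k)"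
  have "yule_cov \<alpha> p n = (\<Sum>k\<in>{1..<n}. Dk \<alpha> n k * ?q k)"
    using cov_decomp a by simp
  also have "\<dots> \<le> (\<Sum>k\<in>{1..<n}. 8 * p * KK (2 * \<alpha>) * real n powr (- 4 * \<alpha>) * real k powr (2 * \<alpha> - 2))"
  proof (rule sum_mono)
    fix k assume "k \<in> {1..<n}"
    then have k: "1 \<le> k" "k < n" by auto
    have B0: "0 \<le> KK (2 * \<alpha>) * real k powr (2 * \<alpha> - 1) * real n powr (- 4 * \<alpha>)"
      using KK_nonneg by simp
    have "Dk \<alpha> n k * ?q k \<le> (KK (2 * \<alpha>) * real k powr (2 * \<alpha> - 1) * real n powr (- 4 * \<alpha>)) * ?q k"
      by (rule mult_right_mono[OF Dk_bound[OF a k] q_bound(1)[OF k p]])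
    also have "\<dots> \<le> (KK (2 * \<alpha>) * real k powr (2 * \<alpha> - 1) * real n powr (- 4 * \<alpha>)) * (8 * p / real k)"
      by (rule mult_left_mono[OF q_bound(2)[OF k p] B0])
    also have "\<dots> = 8 * p * KK (2 * \<alpha>) * real n powr (- 4 * \<alpha>) * (real k powr (2 * \<alpha> - 1) / real k)"
      by (simp add: algebra_simps)
    also have "real k powr (2 * \<alpha> - 1) / real k = real k powr (2 * \<alpha> - 2)"
      using k by (simp add: powr_diff power2_eq_square)
    finally show "Dk \<alpha> n k * ?q k \<le> 8 * p * KK (2 * \<alpha>) * real n powr (- 4 * \<alpha>) * real k powr (2 * \<alpha> - 2)" .
  qed
  also have "\<dots> = 8 * p * KK (2 * \<alpha>) * real n powr (- 4 * \<alpha>) * (\<Sum>k\<in>{1..<n}. real k powr (2 * \<alpha> - 2))"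
    by (simp add: sum_distrib_left)
  finally show ?thesis .
qed

lemma rate_bound:
  assumes a: "\<alpha> > 0"
  shows "\<exists>C'\<ge>0. \<forall>n\<ge>3. real n powr (- 4 * \<alpha>) * (\<Sum>k\<in>{1..<n}. real k powr (2 * \<alpha> - 2)) \<le> C' * lemma5_rate \<alpha> n"
proof (cases "\<alpha> < 1/2")
  case True
  define Z where "Z = suminf (\<lambda>k. real k powr (2 * \<alpha> - 2))"
  have Z0: "0 \<le> Z" unfolding Z_def by (rule suminf_nonneg) (use True summable_real_powr_iff in auto)
  show ?thesis
  proof (intro exI[of _ Z] conjI allI impI Z0)
    fix n :: nat assume "3 \<le> n"
    have SZ: "(\<Sum>k\<in>{1..<n}. real k powr (2 * \<alpha> - 2)) \<le> Z" unfolding Z_def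
      by (rule sum_powr_small) (use True in simp)
    then show "real n powr (- 4 * \<alpha>) * (\<Sum>k\<in>{1..<n}. real k powr (2 * \<alpha> - 2)) \<le> Z * lemma5_rate \<alpha> n"
    proof -
      have "real n powr (- 4 * \<alpha>) * (\<Sum>k\<in>{1..<n}. real k powr (2 * \<alpha> - 2)) \<le> real n powr (- 4 * \<alpha>) * Z"
        by (rule mult_left_mono) (use SZ in simp_all)
      then show ?thesis unfolding lemma5_rate_def using True by (simp add: mult.commute)
    qed
  qed
next
  case F: False
  show ?thesis
  proof (cases "\<alpha> = 1/2")
    case True
    show ?thesis
    proof (intro exI[of _ 2] conjI allI impI)
      fix n :: nat assume n3: "3 \<le> n"
      have ln1: "1 \<le> ln (real n)"
      proof -
        have "ln 3 \<le> ln (real n)" using n3 by simp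
        then show ?thesis using ln3_gt_1 by simp
      qed
      have "(\<Sum>k\<in>{1..<n}. real k powr (2 * \<alpha> - 2)) \<le> 1 + ln (real n)"
      proof -
        have e: "2 * \<alpha> - 2 = -1" using True by simp
        show ?thesis unfolding e using sum_powr_harm[of n] n3 by simp
      qed
      also have "\<dots> \<le> 2 * ln (real n)" using ln1 by simp
      finally have S: "(\<Sum>k\<in>{1..<n}. real k powr (2 * \<alpha> - 2)) \<le> 2 * ln (real n)" .
      have e4: "- 4 * \<alpha> = - 2" using True by simp
      have np: "real n powr (- 4 * \<alpha>) = 1 / (real n)^2"
        unfolding e4 using n3 by (simp add: powr_minus_divide powr_realpow)
      have "real n powr (- 4 * \<alpha>) * (\<Sum>k\<in>{1..<n}. real k powr (2 * \<alpha> - 2)) \<le> real n powr (- 4 * \<alpha>) * (2 * ln (real n))"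
        by (rule mult_left_mono[OF S]) simp
      also have "\<dots> = 2 * lemma5_rate \<alpha> n" unfolding lemma5_rate_def np using True by simp
      finally show "real n powr (- 4 * \<alpha>) * (\<Sum>k\<in>{1..<n}. real k powr (2 * \<alpha> - 2)) \<le> 2 * lemma5_rate \<alpha> n" .
    qed simp
  next
    case F2: False
    define s where "s = 2 * \<alpha> - 1"
    have s0: "0 < s" using F F2 unfolding s_def by simp
    show ?thesis
    proof (intro exI[of _ "1 + 1 / s"] conjI allI impI)
      show "0 \<le> 1 + 1 / s" using s0 by simp
      fix n :: nat assume n3: "3 \<le> n"
      have S: "(\<Sum>k\<in>{1..<n}. real k powr (2 * \<alpha> - 2)) \<le> (1 + 1 / s) * real n powr s"
        using sum_powr_big[OF s0, of n] n3 unfolding s_def by simp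
      have "real n powr (- 4 * \<alpha>) * (\<Sum>k\<in>{1..<n}. real k powr (2 * \<alpha> - 2)) \<le> real n powr (- 4 * \<alpha>) * ((1 + 1 / s) * real n powr s)"
        by (rule mult_left_mono[OF S]) simp
      also have "\<dots> = (1 + 1 / s) * (real n powr (- 4 * \<alpha>) * real n powr s)" by simp
      also have "real n powr (- 4 * \<alpha>) * real n powr s = real n powr (- (2 * \<alpha> + 1))"
        unfolding s_def using n3 by (simp add: powr_add[symmetric])
      also have "real n powr (- (2 * \<alpha> + 1)) = lemma5_rate \<alpha> n" unfolding lemma5_rate_def using F F2 by simp
      finally show "real n powr (- 4 * \<alpha>) * (\<Sum>k\<in>{1..<n}. real k powr (2 * \<alpha> - 2)) \<le> (1 + 1 / s) * lemma5_rate \<alpha> n" .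
    qed
  qed
qed

lemma rate_nonneg: "n \<ge> 1 \<Longrightarrow> 0 \<le> lemma5_rate \<alpha> n"
  unfolding lemma5_rate_def by auto

theorem lemma5:
  fixes \<alpha> :: real
  assumes "\<alpha> > 0"
  shows "\<exists>C>0. \<forall>p::real. 0 \<le> p \<and> p \<le> 1 \<longrightarrow>
           (\<exists>e::nat \<Rightarrow> real. e \<longlonglongrightarrow> 0 \<and>
              (\<forall>\<^sub>F n in sequentially. yule_cov \<alpha> p n \<le> (1 + e n) * (p * C * lemma5_rate \<alpha> n)))"
proof -
  obtain C' where C'0: "C' \<ge> 0" and C': "\<And>n. n \<ge> 3 \<Longrightarrow> real n powr (- 4 * \<alpha>) * (\<Sum>k\<in>{1..<n}. real k powr (2 * \<alpha> - 2)) \<le> C' * lemma5_rate \<alpha> n"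
    using rate_bound[OF assms] by blast
  define C where "C = 8 * KK (2 * \<alpha>) * C' + 1"
  have C0: "C > 0" unfolding C_def using KK_nonneg[of "2 * \<alpha>"] C'0 by (intro add_nonneg_pos mult_nonneg_nonneg) auto
  show ?thesis
  proof (intro exI[of _ C] conjI allI impI C0)
    fix p :: real assume p: "0 \<le> p \<and> p \<le> 1"
    show "\<exists>e::nat \<Rightarrow> real. e \<longlonglongrightarrow> 0 \<and> (\<forall>\<^sub>F n in sequentially. yule_cov \<alpha> p n \<le> (1 + e n) * (p * C * lemma5_rate \<alpha> n))"
    proof (intro exI[of _ "\<lambda>_. 0"] conjI)
      show "(\<lambda>_. 0::real) \<longlonglongrightarrow> 0" by simp
      show "\<forall>\<^sub>F n in sequentially. yule_cov \<alpha> p n \<le> (1 + 0) * (p * C * lemma5_rate \<alpha> n)"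
      proof (rule eventually_sequentiallyI[of 3])
        fix n :: nat assume n3: "3 \<le> n"
        have r0: "0 \<le> lemma5_rate \<alpha> n" by (rule rate_nonneg) (use n3 in simp)
        have "yule_cov \<alpha> p n \<le> 8 * p * KK (2 * \<alpha>) * (real n powr (- 4 * \<alpha>) * (\<Sum>k\<in>{1..<n}. real k powr (2 * \<alpha> - 2)))"
          using cov_bound[OF assms, of p n] p by (simp add: mult.assoc)
        also have "\<dots> \<le> 8 * p * KK (2 * \<alpha>) * (C' * lemma5_rate \<alpha> n)"
          by (rule mult_left_mono[OF C'[OF n3]]) (use p KK_nonneg in simp)
        also have "\<dots> = p * (8 * KK (2 * \<alpha>) * C') * lemma5_rate \<alpha> n" by (simp add: algebra_simps)
        also have "\<dots> \<le> p * C * lemma5_rate \<alpha> n"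
          unfolding C_def using p r0 by (intro mult_right_mono mult_left_mono) auto
        finally show "yule_cov \<alpha> p n \<le> (1 + 0) * (p * C * lemma5_rate \<alpha> n)" by simp
      qed
    qed
  qed
qed

end
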